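(* If \(M\) is a nuclear bornological \(V\)-module, then so is its completion \(\overline{M}\).
   Context: Let \(V\) be a complete discrete valuation ring with uniformiser \(\pi\). A bornology on a set is a collection of subsets (called bounded) containing all finite subsets and closed under finite unions and under taking subsets. A bornological \(V\)-module is a \(V\)-module with a bornology such that every bounded subset is contained in a bounded \(V\)-submodule; bounded maps are \(V\)-linear maps sending bounded sets to bounded sets. It is complete if every bounded subset is contained in a bounded, \(\pi\)-adically complete \(V\)-submodule. Every bornological \(V\)-module \(M\) has a completion \(\overline{M}\): a complete bornological \(V\)-module with a bounded map \(M\to\overline M\) through which every bounded map from \(M\) to a complete bornological \(V\)-module factors uniquely. A subset \(S\) of a bornological \(V\)-module \(M\) is compactoid if there is a bounded \(V\)-submodule \(T\subseteq M\) with \(S\subseteq T\) such that for every \(n\in\mathbb N\) there is a finite set \(F_n\subseteq T\) with \(S\subseteq VF_n+\pi^nT\). \(M\) is nuclear if every bounded subset of \(M\) is compactoid. *)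

theory Defs
  imports "HOL-Algebra.Module" "HOL-Algebra.FiniteProduct"
begin

text \<open>Completeness: every pi-adic Cauchy sequence converges pi-adically
  (separatedness is automatic in a DVR).\<close>

definition pi_ideal :: "('v, 'x) ring_scheme \<Rightarrow> 'v \<Rightarrow> nat \<Rightarrow> 'v set" where
  "pi_ideal V p n = {p [^]\<^bsub>V\<^esub> n \<otimes>\<^bsub>V\<^esub> a | a. a \<in> carrier V}"

definition complete_dvr :: "('v, 'x) ring_scheme \<Rightarrow> 'v \<Rightarrow> bool" where
  "complete_dvr V p \<longleftrightarrow>
     domain V \<and> p \<in> carrier V \<and> p \<noteq> \<zero>\<^bsub>V\<^esub> \<and> p \<notin> Units V \<and>
     (\<forall>x\<in>carrier V. x \<noteq> \<zero>\<^bsub>V\<^esub> \<longrightarrow>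
        (\<exists>u\<in>Units V. \<exists>n::nat. x = u \<otimes>\<^bsub>V\<^esub> (p [^]\<^bsub>V\<^esub> n))) \<and>
     (\<forall>x::nat \<Rightarrow> 'v. (\<forall>n. x n \<in> carrier V) \<and>
        (\<forall>n. x (Suc n) \<ominus>\<^bsub>V\<^esub> x n \<in> pi_ideal V p n) \<longrightarrow>
        (\<exists>y\<in>carrier V. \<forall>n. x n \<ominus>\<^bsub>V\<^esub> y \<in> pi_ideal V p n))"

definition pi_mult :: "('v, 'x) ring_scheme \<Rightarrow> ('v, 'm) module \<Rightarrow> 'v \<Rightarrow> nat \<Rightarrow> 'm set \<Rightarrow> 'm set" where
  "pi_mult V M p n T = (\<lambda>t. (p [^]\<^bsub>V\<^esub> n) \<odot>\<^bsub>M\<^esub> t) ` T"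

text \<open>T is pi-adically complete: separated and every pi-adic Cauchy sequence in T
  has a limit in T (i.e. T \<rightarrow> lim T/pi^n T is bijective).\<close>
definition padic_complete :: "('v, 'x) ring_scheme \<Rightarrow> ('v, 'm) module \<Rightarrow> 'v \<Rightarrow> 'm set \<Rightarrow> bool" where
  "padic_complete V M p T \<longleftrightarrow>
     (\<Inter>n. pi_mult V M p n T) = {\<zero>\<^bsub>M\<^esub>} \<and>
     (\<forall>x::nat \<Rightarrow> 'm. (\<forall>n. x n \<in> T) \<and>
        (\<forall>n. x (Suc n) \<ominus>\<^bsub>M\<^esub> x n \<in> pi_mult V M p n T) \<longrightarrow>
        (\<exists>y\<in>T. \<forall>n. x n \<ominus>\<^bsub>M\<^esub> y \<in> pi_mult V M p n T))"

definition bornological_module :: "('v, 'x) ring_scheme \<Rightarrow> ('v, 'm) module \<Rightarrow> 'm set set \<Rightarrow> bool" where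
  "bornological_module V M B \<longleftrightarrow>
     module V M \<and>
     (\<forall>S\<in>B. S \<subseteq> carrier M) \<and>
     (\<forall>S. finite S \<and> S \<subseteq> carrier M \<longrightarrow> S \<in> B) \<and>
     (\<forall>S\<in>B. \<forall>T\<in>B. S \<union> T \<in> B) \<and>
     (\<forall>S\<in>B. \<forall>T. T \<subseteq> S \<longrightarrow> T \<in> B) \<and>
     (\<forall>S\<in>B. \<exists>T\<in>B. submodule T V M \<and> S \<subseteq> T)"

definition linear_map :: "('v, 'x) ring_scheme \<Rightarrow> ('v, 'm) module \<Rightarrow> ('v, 'n) module \<Rightarrow> ('m \<Rightarrow> 'n) \<Rightarrow> bool" where
  "linear_map V M N f \<longleftrightarrow>
     f \<in> carrier M \<rightarrow> carrier N \<and>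
     (\<forall>x\<in>carrier M. \<forall>y\<in>carrier M. f (x \<oplus>\<^bsub>M\<^esub> y) = f x \<oplus>\<^bsub>N\<^esub> f y) \<and>
     (\<forall>a\<in>carrier V. \<forall>x\<in>carrier M. f (a \<odot>\<^bsub>M\<^esub> x) = a \<odot>\<^bsub>N\<^esub> f x)"

definition bounded_map :: "('v, 'x) ring_scheme \<Rightarrow> ('v, 'm) module \<Rightarrow> 'm set set
     \<Rightarrow> ('v, 'n) module \<Rightarrow> 'n set set \<Rightarrow> ('m \<Rightarrow> 'n) \<Rightarrow> bool" where
  "bounded_map V M BM N BN f \<longleftrightarrow> linear_map V M N f \<and> (\<forall>S\<in>BM. f ` S \<in> BN)"

definition complete_born :: "('v, 'x) ring_scheme \<Rightarrow> 'v \<Rightarrow> ('v, 'm) module \<Rightarrow> 'm set set \<Rightarrow> bool" where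
  "complete_born V p M B \<longleftrightarrow>
     (\<forall>S\<in>B. \<exists>T\<in>B. submodule T V M \<and> S \<subseteq> T \<and> padic_complete V M p T)"

text \<open>Completion, via its universal property.  Targets range over bornological
  modules whose carrier lives in the same HOL type as the completion.\<close>
definition is_completion :: "('v, 'x) ring_scheme \<Rightarrow> 'v \<Rightarrow> ('v, 'm) module \<Rightarrow> 'm set set
     \<Rightarrow> ('v, 'c) module \<Rightarrow> 'c set set \<Rightarrow> ('m \<Rightarrow> 'c) \<Rightarrow> bool" where
  "is_completion V p M BM C BC \<iota> \<longleftrightarrow>
     bornological_module V C BC \<and> complete_born V p C BC \<and> bounded_map V M BM C BC \<iota> \<and>
     (\<forall>(D::('v, 'c) module) BD g.
        bornological_module V D BD \<and> complete_born V p D BD \<and> bounded_map V M BM D BD g \<longrightarrow>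
        (\<exists>h. bounded_map V C BC D BD h \<and> (\<forall>x\<in>carrier M. h (\<iota> x) = g x) \<and>
             (\<forall>h'. bounded_map V C BC D BD h' \<and> (\<forall>x\<in>carrier M. h' (\<iota> x) = g x) \<longrightarrow>
                   (\<forall>y\<in>carrier C. h' y = h y))))"

definition span_fin :: "('v, 'x) ring_scheme \<Rightarrow> ('v, 'm) module \<Rightarrow> 'm set \<Rightarrow> 'm set" where
  "span_fin V M F = {finsum M (\<lambda>f. c f \<odot>\<^bsub>M\<^esub> f) F | c. c \<in> F \<rightarrow> carrier V}"

definition set_plus_mod :: "('v, 'm) module \<Rightarrow> 'm set \<Rightarrow> 'm set \<Rightarrow> 'm set" where
  "set_plus_mod M A B = {a \<oplus>\<^bsub>M\<^esub> b | a b. a \<in> A \<and> b \<in> B}"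

definition compactoid :: "('v, 'x) ring_scheme \<Rightarrow> 'v \<Rightarrow> ('v, 'm) module \<Rightarrow> 'm set set \<Rightarrow> 'm set \<Rightarrow> bool" where
  "compactoid V p M B S \<longleftrightarrow>
     (\<exists>T\<in>B. submodule T V M \<and> S \<subseteq> T \<and>
        (\<forall>n::nat. \<exists>F. finite F \<and> F \<subseteq> T \<and>
            S \<subseteq> set_plus_mod M (span_fin V M F) (pi_mult V M p n T)))"

definition nuclear :: "('v, 'x) ring_scheme \<Rightarrow> 'v \<Rightarrow> ('v, 'm) module \<Rightarrow> 'm set set \<Rightarrow> bool" where
  "nuclear V p M B \<longleftrightarrow> (\<forall>S\<in>B. compactoid V p M B S)"

end

theory Submission imports Defs begin
context abelian_group begin
lemma gid1: "a \<in> carrier G \<Longrightarrow> b \<in> carrier G \<Longrightarrow> c \<in> carrier G \<Longrightarrow> (b \<ominus> a) \<oplus> (c \<ominus> b) = c \<ominus> a"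
proof -
  assume h: "a \<in> carrier G" "b \<in> carrier G" "c \<in> carrier G"
  have "(b \<ominus> a) \<oplus> (c \<ominus> b) = (b \<oplus> \<ominus> a) \<oplus> (c \<oplus> \<ominus> b)" by (simp add: minus_eq)
  also have "\<dots> = b \<oplus> (\<ominus> a \<oplus> (c \<oplus> \<ominus> b))" using h by (simp add: a_assoc)
  also have "\<dots> = b \<oplus> ((c \<oplus> \<ominus> b) \<oplus> \<ominus> a)" using h by (subst a_comm[of "\<ominus> a"]) auto
  also have "\<dots> = b \<oplus> (c \<oplus> (\<ominus> b \<oplus> \<ominus> a))" using h by (simp add: a_assoc)
  also have "\<dots> = c \<oplus> (b \<oplus> (\<ominus> b \<oplus> \<ominus> a))" using h by (subst a_lcomm[of b c]) auto
  also have "\<dots> = c \<ominus> a" using h by (simp add: r_neg2 minus_eq)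
  finally show ?thesis .
qed
lemma gid2: "a \<in> carrier G \<Longrightarrow> b \<in> carrier G \<Longrightarrow> (a \<oplus> b) \<ominus> a = b"
proof -
  assume h: "a \<in> carrier G" "b \<in> carrier G"
  have "(a \<oplus> b) \<ominus> a = (b \<oplus> a) \<oplus> \<ominus> a" using h by (simp add: minus_eq a_comm[of a b])
  also have "\<dots> = b \<oplus> (a \<oplus> \<ominus> a)" using h by (simp add: a_assoc)
  also have "\<dots> = b" using h by (simp add: r_neg)
  finally show ?thesis .
qed
lemma gid3: "a \<in> carrier G \<Longrightarrow> b \<in> carrier G \<Longrightarrow> a \<ominus> (a \<ominus> b) = b"
proof -
  assume h: "a \<in> carrier G" "b \<in> carrier G"
  have "a \<ominus> (a \<ominus> b) = a \<oplus> (\<ominus> a \<oplus> b)" using h by (simp add: minus_eq minus_add minus_minus)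
  also have "\<dots> = b" using h by (simp add: r_neg2)
  finally show ?thesis .
qed
lemma gid5: "a \<in> carrier G \<Longrightarrow> b \<in> carrier G \<Longrightarrow> a \<oplus> b = \<zero> \<Longrightarrow> a = \<ominus> b"
proof -
  assume h: "a \<in> carrier G" "b \<in> carrier G" "a \<oplus> b = \<zero>"
  have "\<ominus> b = (a \<oplus> b) \<ominus> b" using h by (simp add: minus_eq l_zero)
  also have "\<dots> = a" using h gid2[of b a] by (simp add: a_comm)
  finally show ?thesis by simp
qed
lemma gid6: "a \<in> carrier G \<Longrightarrow> b \<in> carrier G \<Longrightarrow> c \<in> carrier G \<Longrightarrow> d \<in> carrier G \<Longrightarrow>
   (a \<oplus> b) \<oplus> (c \<oplus> d) = (a \<oplus> c) \<oplus> (b \<oplus> d)"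
proof -
  assume h: "a \<in> carrier G" "b \<in> carrier G" "c \<in> carrier G" "d \<in> carrier G"
  have "(a \<oplus> b) \<oplus> (c \<oplus> d) = a \<oplus> (b \<oplus> (c \<oplus> d))" using h by (simp add: a_assoc)
  also have "b \<oplus> (c \<oplus> d) = c \<oplus> (b \<oplus> d)" using h by (subst a_lcomm[of b c]) auto
  also have "a \<oplus> (c \<oplus> (b \<oplus> d)) = (a \<oplus> c) \<oplus> (b \<oplus> d)" using h by (simp add: a_assoc)
  finally show ?thesis .
qed
lemma gid4: "u \<in> carrier G \<Longrightarrow> v \<in> carrier G \<Longrightarrow> y \<in> carrier G \<Longrightarrow> w \<in> carrier G \<Longrightarrow>
   (u \<ominus> y) \<ominus> ((u \<ominus> v) \<ominus> w) = (v \<ominus> y) \<oplus> w"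
proof -
  assume h: "u \<in> carrier G" "v \<in> carrier G" "y \<in> carrier G" "w \<in> carrier G"
  have e: "u \<ominus> y = (u \<ominus> v) \<oplus> (v \<ominus> y)"
    using h gid1[of y v u] by (simp add: a_comm[of "v \<ominus> y"])
  have "(u \<ominus> y) \<ominus> ((u \<ominus> v) \<ominus> w) = (u \<ominus> y) \<oplus> (\<ominus> (u \<ominus> v) \<oplus> w)"
    using h by (simp add: minus_eq[of "u \<ominus> y"] minus_eq[of "u \<ominus> v" w] minus_add minus_minus)
  also have "\<dots> = ((u \<ominus> y) \<oplus> \<ominus> (u \<ominus> v)) \<oplus> w"
    using h by (simp add: a_assoc)
  also have "(u \<ominus> y) \<oplus> \<ominus> (u \<ominus> v) = v \<ominus> y"
  proof -
    have "(u \<ominus> y) \<oplus> \<ominus> (u \<ominus> v) = (u \<ominus> y) \<ominus> (u \<ominus> v)" by (simp add: minus_eq)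
    also have "\<dots> = v \<ominus> y" unfolding e using h by (simp add: gid2)
    finally show ?thesis .
  qed
  finally show ?thesis .
qed
end

primrec psum :: "('a, 'b) ring_scheme \<Rightarrow> ('a, 'c) module \<Rightarrow> 'a \<Rightarrow> (nat \<Rightarrow> 'c) \<Rightarrow> nat \<Rightarrow> nat \<Rightarrow> 'c" where
  "psum R M p k m 0 = \<zero>\<^bsub>M\<^esub>"
| "psum R M p k m (Suc j) = psum R M p k m j \<oplus>\<^bsub>M\<^esub> ((p [^]\<^bsub>R\<^esub> j) \<odot>\<^bsub>M\<^esub> k (m + j))"

locale pmod = module R M for R :: "('a, 'b) ring_scheme" and M :: "('a, 'c) module" +
  fixes p assumes p_closed: "p \<in> carrier R"
begin

abbreviation P :: "nat \<Rightarrow> 'a" where "P n \<equiv> p [^]\<^bsub>R\<^esub> n"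

lemma P_closed[simp]: "P n \<in> carrier R"
  using p_closed by simp

lemma subm: assumes "submodule H R M"
  shows "H \<subseteq> carrier M" "\<zero>\<^bsub>M\<^esub> \<in> H"
    "\<And>a. a \<in> H \<Longrightarrow> \<ominus>\<^bsub>M\<^esub> a \<in> H"
    "\<And>a b. \<lbrakk>a \<in> carrier R; b \<in> H\<rbrakk> \<Longrightarrow> a \<odot>\<^bsub>M\<^esub> b \<in> H"
    "\<And> a b. \<lbrakk>a \<in> H ; b \<in> H\<rbrakk> \<Longrightarrow> a \<oplus>\<^bsub>M\<^esub> b \<in> H"
    "\<And> a b. \<lbrakk>a \<in> H ; b \<in> H\<rbrakk> \<Longrightarrow> a \<ominus>\<^bsub>M\<^esub> b \<in> H"
proof -
  show 1: "H \<subseteq> carrier M" using submoduleE(1)[OF assms] .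
  show 3: "\<And>a. a \<in> H \<Longrightarrow> \<ominus>\<^bsub>M\<^esub> a \<in> H" using submoduleE(3)[OF assms] .
  show 4: "\<And>a b. \<lbrakk>a \<in> carrier R; b \<in> H\<rbrakk> \<Longrightarrow> a \<odot>\<^bsub>M\<^esub> b \<in> H" using submoduleE(4)[OF assms] .
  show 5: "\<And> a b. \<lbrakk>a \<in> H ; b \<in> H\<rbrakk> \<Longrightarrow> a \<oplus>\<^bsub>M\<^esub> b \<in> H" using submoduleE(5)[OF assms] .
  show "\<And> a b. \<lbrakk>a \<in> H ; b \<in> H\<rbrakk> \<Longrightarrow> a \<ominus>\<^bsub>M\<^esub> b \<in> H" using 3 5 by (simp add: minus_eq)
  obtain x where "x \<in> H" using submoduleE(2)[OF assms] by blast
  then have "\<zero>\<^bsub>R\<^esub> \<odot>\<^bsub>M\<^esub> x \<in> H" using 4 by blast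
  moreover have "\<zero>\<^bsub>R\<^esub> \<odot>\<^bsub>M\<^esub> x = \<zero>\<^bsub>M\<^esub>" using 1 \<open>x \<in> H\<close> by auto
  ultimately show "\<zero>\<^bsub>M\<^esub> \<in> H" by simp
qed

lemma smult_comm: "a \<in> carrier R \<Longrightarrow> b \<in> carrier R \<Longrightarrow> x \<in> carrier M \<Longrightarrow>
   a \<odot>\<^bsub>M\<^esub> (b \<odot>\<^bsub>M\<^esub> x) = b \<odot>\<^bsub>M\<^esub> (a \<odot>\<^bsub>M\<^esub> x)"
  by (metis smult_assoc1 R.m_comm)

lemma P_mult: "x \<in> carrier M \<Longrightarrow> P m \<odot>\<^bsub>M\<^esub> (P n \<odot>\<^bsub>M\<^esub> x) = P (m + n) \<odot>\<^bsub>M\<^esub> x"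
  by (simp add: smult_assoc1[symmetric] R.nat_pow_mult p_closed)

lemma pm_sub: assumes "submodule T R M" shows "submodule (pi_mult R M p n T) R M"
proof (rule submoduleI)
  note s = subm[OF assms]
  show "pi_mult R M p n T \<subseteq> carrier M" using s(1) unfolding pi_mult_def by auto
  show "\<zero>\<^bsub>M\<^esub> \<in> pi_mult R M p n T" unfolding pi_mult_def
    using s(2) by (auto intro!: image_eqI[of _ _ "\<zero>\<^bsub>M\<^esub>"])
  show "\<ominus>\<^bsub>M\<^esub> a \<in> pi_mult R M p n T" if ha: "a \<in> pi_mult R M p n T" for a
  proof -
    obtain t where t: "t \<in> T" "a = P n \<odot>\<^bsub>M\<^esub> t" using ha unfolding pi_mult_def by auto
    have "\<ominus>\<^bsub>M\<^esub> a = P n \<odot>\<^bsub>M\<^esub> (\<ominus>\<^bsub>M\<^esub> t)" using t s(1) smult_r_minus by auto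
    then show ?thesis unfolding pi_mult_def using s(3) t by auto
  qed
  show "a \<oplus>\<^bsub>M\<^esub> b \<in> pi_mult R M p n T" if ha: "a \<in> pi_mult R M p n T" "b \<in> pi_mult R M p n T" for a b
  proof -
    obtain t where t: "t \<in> T" "a = P n \<odot>\<^bsub>M\<^esub> t" using ha unfolding pi_mult_def by auto
    obtain u where u: "u \<in> T" "b = P n \<odot>\<^bsub>M\<^esub> u" using ha unfolding pi_mult_def by auto
    have "a \<oplus>\<^bsub>M\<^esub> b = P n \<odot>\<^bsub>M\<^esub> (t \<oplus>\<^bsub>M\<^esub> u)" 
      using t u s(1) smult_r_distr[of "P n" t u] by (simp add: subsetD)
    then show ?thesis unfolding pi_mult_def using s(5) t u by auto
  qed
  show "a \<odot>\<^bsub>M\<^esub> b \<in> pi_mult R M p n T" if ha: "a \<in> carrier R" "b \<in> pi_mult R M p n T" for a b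
  proof -
    obtain t where t: "t \<in> T" "b = P n \<odot>\<^bsub>M\<^esub> t" using ha unfolding pi_mult_def by auto
    have "a \<odot>\<^bsub>M\<^esub> b = P n \<odot>\<^bsub>M\<^esub> (a \<odot>\<^bsub>M\<^esub> t)" using t s(1) ha smult_comm by auto
    then show ?thesis unfolding pi_mult_def using s(4) t ha by auto
  qed
qed

lemma pm_mono: "T \<subseteq> T' \<Longrightarrow> pi_mult R M p n T \<subseteq> pi_mult R M p n T'"
  unfolding pi_mult_def by auto

lemma pm_in: "t \<in> T \<Longrightarrow> P n \<odot>\<^bsub>M\<^esub> t \<in> pi_mult R M p n T"
  unfolding pi_mult_def by auto

lemma pm_sub_T: "submodule T R M \<Longrightarrow> pi_mult R M p n T \<subseteq> T"
  unfolding pi_mult_def using subm(4) by auto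

lemma pm_pm: assumes "submodule T R M" "x \<in> pi_mult R M p n T"
  shows "P m \<odot>\<^bsub>M\<^esub> x \<in> pi_mult R M p (m + n) T"
proof -
  obtain t where t: "t \<in> T" "x = P n \<odot>\<^bsub>M\<^esub> t" using assms unfolding pi_mult_def by auto
  then show ?thesis using P_mult[of t m n] subm(1)[OF assms(1)] pm_in[of t T "m+n"] by auto
qed

lemma pm_anti: assumes "submodule T R M" "m \<le> n"
  shows "pi_mult R M p n T \<subseteq> pi_mult R M p m T"
proof
  fix x assume "x \<in> pi_mult R M p n T"
  then obtain t where t: "t \<in> T" "x = P n \<odot>\<^bsub>M\<^esub> t" unfolding pi_mult_def by auto
  have "P (n - m) \<odot>\<^bsub>M\<^esub> t \<in> T" using subm(4)[OF assms(1)] t by auto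
  moreover have "x = P m \<odot>\<^bsub>M\<^esub> (P (n - m) \<odot>\<^bsub>M\<^esub> t)"
    using t P_mult[of t m "n - m"] assms(2) subm(1)[OF assms(1)] by auto
  ultimately show "x \<in> pi_mult R M p m T" using pm_in by auto
qed


lemma sp_least: assumes "finite F" "submodule N R M" "F \<subseteq> N" "c \<in> F \<rightarrow> carrier R"
  shows "finsum M (\<lambda>f. c f \<odot>\<^bsub>M\<^esub> f) F \<in> N"
  using assms
proof (induct F rule: finite_induct)
  case empty then show ?case using subm(2)[OF assms(2)] by simp
next
  case (insert x F)
  note s = subm[OF assms(2)]
  have xc: "x \<in> carrier M" "F \<subseteq> carrier M" using insert s(1) by auto
  have fc: "(\<lambda>f. c f \<odot>\<^bsub>M\<^esub> f) \<in> F \<rightarrow> carrier M" using insert xc by (auto simp: Pi_def subsetD)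
  have "finsum M (\<lambda>f. c f \<odot>\<^bsub>M\<^esub> f) (insert x F) = c x \<odot>\<^bsub>M\<^esub> x \<oplus>\<^bsub>M\<^esub> finsum M (\<lambda>f. c f \<odot>\<^bsub>M\<^esub> f) F"
    using insert xc fc by (simp add: finsum_insert Pi_def)
  moreover have "c x \<odot>\<^bsub>M\<^esub> x \<in> N" using insert s(4) by auto
  moreover have "finsum M (\<lambda>f. c f \<odot>\<^bsub>M\<^esub> f) F \<in> N" using insert by auto
  ultimately show ?case using s(5) by simp
qed

lemma sp_closed: assumes "finite F" "F \<subseteq> carrier M" "c \<in> F \<rightarrow> carrier R"
  shows "finsum M (\<lambda>f. c f \<odot>\<^bsub>M\<^esub> f) F \<in> carrier M"
  using sp_least[OF assms(1) carrier_is_submodule assms(2,3)] .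

lemma sp_sub: assumes "finite F" "F \<subseteq> carrier M"
  shows "submodule (span_fin R M F) R M"
proof -
  have fc: "(\<lambda>f. c f \<odot>\<^bsub>M\<^esub> f) \<in> F \<rightarrow> carrier M" if hh: "c \<in> F \<rightarrow> carrier R" for c
    using hh assms by (auto simp: Pi_def subsetD)
  have sm: "a \<odot>\<^bsub>M\<^esub> x \<in> span_fin R M F" if hh: "a \<in> carrier R" "x \<in> span_fin R M F" for a x
  proof -
    obtain c where c: "c \<in> F \<rightarrow> carrier R" "x = finsum M (\<lambda>f. c f \<odot>\<^bsub>M\<^esub> f) F"
      using hh unfolding span_fin_def by auto
    have "a \<odot>\<^bsub>M\<^esub> x = finsum M (\<lambda>f. a \<odot>\<^bsub>M\<^esub> (c f \<odot>\<^bsub>M\<^esub> f)) F"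
      using c finsum_smult_ldistr[OF assms(1) hh(1) fc[OF c(1)]] by simp
    also have "\<dots> = finsum M (\<lambda>f. (a \<otimes>\<^bsub>R\<^esub> c f) \<odot>\<^bsub>M\<^esub> f) F"
      by (rule finsum_cong') (use c assms hh in \<open>auto simp: Pi_def subsetD smult_assoc1\<close>)
    finally show ?thesis unfolding span_fin_def using c hh by (auto simp: Pi_def)
  qed
  show ?thesis
  proof (rule submoduleI)
    show "span_fin R M F \<subseteq> carrier M" unfolding span_fin_def using sp_closed assms by auto
    have "finsum M (\<lambda>f. \<zero>\<^bsub>R\<^esub> \<odot>\<^bsub>M\<^esub> f) F = finsum M (\<lambda>f. \<zero>\<^bsub>M\<^esub>) F"
      by (rule finsum_cong') (use assms in \<open>auto simp: subsetD\<close>)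
    also have "\<dots> = \<zero>\<^bsub>M\<^esub>" using assms finsum_zero by simp
    finally show "\<zero>\<^bsub>M\<^esub> \<in> span_fin R M F" unfolding span_fin_def
      by (auto intro!: exI[of _ "\<lambda>f. \<zero>\<^bsub>R\<^esub>"])
    show "\<ominus>\<^bsub>M\<^esub> a \<in> span_fin R M F" if hh: "a \<in> span_fin R M F" for a
    proof -
      have ac: "a \<in> carrier M" using hh unfolding span_fin_def using sp_closed assms by auto
      have "\<ominus>\<^bsub>M\<^esub> a = (\<ominus>\<^bsub>R\<^esub> \<one>\<^bsub>R\<^esub>) \<odot>\<^bsub>M\<^esub> a" using smult_l_minus[of "\<one>\<^bsub>R\<^esub>" a] ac by simp
      then show ?thesis using sm[of "\<ominus>\<^bsub>R\<^esub> \<one>\<^bsub>R\<^esub>" a] hh by simp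
    qed
    show "a \<oplus>\<^bsub>M\<^esub> b \<in> span_fin R M F" if hh: "a \<in> span_fin R M F" "b \<in> span_fin R M F" for a b
    proof -
      obtain c where c: "c \<in> F \<rightarrow> carrier R" "a = finsum M (\<lambda>f. c f \<odot>\<^bsub>M\<^esub> f) F"
        using hh unfolding span_fin_def by auto
      obtain d where d: "d \<in> F \<rightarrow> carrier R" "b = finsum M (\<lambda>f. d f \<odot>\<^bsub>M\<^esub> f) F"
        using hh unfolding span_fin_def by auto
      have "a \<oplus>\<^bsub>M\<^esub> b = finsum M (\<lambda>f. c f \<odot>\<^bsub>M\<^esub> f \<oplus>\<^bsub>M\<^esub> d f \<odot>\<^bsub>M\<^esub> f) F"
        using c d finsum_addf[OF fc[OF c(1)] fc[OF d(1)]] by simp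
      also have "\<dots> = finsum M (\<lambda>f. (c f \<oplus>\<^bsub>R\<^esub> d f) \<odot>\<^bsub>M\<^esub> f) F"
        by (rule finsum_cong') (use c d assms in \<open>auto simp: Pi_def subsetD smult_l_distr\<close>)
      finally show ?thesis unfolding span_fin_def using c d by (auto simp: Pi_def)
    qed
    show "a \<odot>\<^bsub>M\<^esub> x \<in> span_fin R M F" if hh: "a \<in> carrier R" "x \<in> span_fin R M F" for a x
      using sm hh by blast
  qed
qed

lemma sp_incl: assumes "finite F" "F \<subseteq> carrier M" shows "F \<subseteq> span_fin R M F"
proof
  fix x assume x: "x \<in> F"
  have "finsum M (\<lambda>f. (if f = x then \<one>\<^bsub>R\<^esub> else \<zero>\<^bsub>R\<^esub>) \<odot>\<^bsub>M\<^esub> f) F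
        = finsum M (\<lambda>f. if x = f then f else \<zero>\<^bsub>M\<^esub>) F"
    by (rule finsum_cong') (use assms in \<open>auto simp: subsetD\<close>)
  also have "\<dots> = x" using finsum_singleton[of x F "\<lambda>f. f"] x assms by (auto simp: subsetD)
  finally show "x \<in> span_fin R M F" unfolding span_fin_def
    by (auto intro!: exI[of _ "\<lambda>f. if f = x then \<one>\<^bsub>R\<^esub> else \<zero>\<^bsub>R\<^esub>"])
qed

lemma sp_mono: assumes "finite F" "finite G" "G \<subseteq> carrier M" "F \<subseteq> G"
  shows "span_fin R M F \<subseteq> span_fin R M G"
proof
  fix x assume "x \<in> span_fin R M F"
  then obtain c where c: "c \<in> F \<rightarrow> carrier R" "x = finsum M (\<lambda>f. c f \<odot>\<^bsub>M\<^esub> f) F"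
    unfolding span_fin_def by auto
  show "x \<in> span_fin R M G" using c sp_least[OF assms(1) sp_sub[OF assms(2,3)]] sp_incl[OF assms(2,3)] assms(4)
    by auto
qed

lemma splus_sub: assumes "submodule A R M" "submodule B R M"
  shows "submodule (set_plus_mod M A B) R M"
proof (rule submoduleI)
  note a = subm[OF assms(1)] and b = subm[OF assms(2)]
  show "set_plus_mod M A B \<subseteq> carrier M" unfolding set_plus_mod_def using a(1) b(1) by auto
  show "\<zero>\<^bsub>M\<^esub> \<in> set_plus_mod M A B" unfolding set_plus_mod_def using a(2) b(2)
    by (auto intro!: exI[of _ "\<zero>\<^bsub>M\<^esub>"])
  show "\<ominus>\<^bsub>M\<^esub> x \<in> set_plus_mod M A B" if hh: "x \<in> set_plus_mod M A B" for x
  proof -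
    obtain u v where uv: "u \<in> A" "v \<in> B" "x = u \<oplus>\<^bsub>M\<^esub> v" using hh unfolding set_plus_mod_def by auto
    have "\<ominus>\<^bsub>M\<^esub> x = \<ominus>\<^bsub>M\<^esub> u \<oplus>\<^bsub>M\<^esub> \<ominus>\<^bsub>M\<^esub> v" using uv a(1) b(1) minus_add by (simp add: subsetD)
    then show ?thesis unfolding set_plus_mod_def using uv a(3) b(3) by auto
  qed
  show "x \<oplus>\<^bsub>M\<^esub> y \<in> set_plus_mod M A B" if hh: "x \<in> set_plus_mod M A B" "y \<in> set_plus_mod M A B" for x y
  proof -
    obtain u v where uv: "u \<in> A" "v \<in> B" "x = u \<oplus>\<^bsub>M\<^esub> v" using hh unfolding set_plus_mod_def by auto
    obtain u' v' where uv': "u' \<in> A" "v' \<in> B" "y = u' \<oplus>\<^bsub>M\<^esub> v'" using hh unfolding set_plus_mod_def by auto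
    have c: "u \<in> carrier M" "v \<in> carrier M" "u' \<in> carrier M" "v' \<in> carrier M" using uv uv' a(1) b(1) by auto
    have "x \<oplus>\<^bsub>M\<^esub> y = (u \<oplus>\<^bsub>M\<^esub> u') \<oplus>\<^bsub>M\<^esub> (v \<oplus>\<^bsub>M\<^esub> v')"
      using uv uv' c gid6 by simp
    moreover have "u \<oplus>\<^bsub>M\<^esub> u' \<in> A" "v \<oplus>\<^bsub>M\<^esub> v' \<in> B" using uv uv' a(5) b(5) by auto
    ultimately show ?thesis unfolding set_plus_mod_def by blast
  qed
  show "r \<odot>\<^bsub>M\<^esub> x \<in> set_plus_mod M A B" if hh: "r \<in> carrier R" "x \<in> set_plus_mod M A B" for r x
  proof -
    obtain u v where uv: "u \<in> A" "v \<in> B" "x = u \<oplus>\<^bsub>M\<^esub> v" using hh unfolding set_plus_mod_def by auto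
    have "r \<odot>\<^bsub>M\<^esub> x = r \<odot>\<^bsub>M\<^esub> u \<oplus>\<^bsub>M\<^esub> r \<odot>\<^bsub>M\<^esub> v" using uv a(1) b(1) hh smult_r_distr by (simp add: subsetD)
    moreover have "r \<odot>\<^bsub>M\<^esub> u \<in> A" "r \<odot>\<^bsub>M\<^esub> v \<in> B" using uv a(4) b(4) hh by auto
    ultimately show ?thesis unfolding set_plus_mod_def by blast
  qed
qed

lemma splus_right: "\<zero>\<^bsub>M\<^esub> \<in> A \<Longrightarrow> B \<subseteq> carrier M \<Longrightarrow> B \<subseteq> set_plus_mod M A B"
  unfolding set_plus_mod_def by (force intro: exI[of _ "\<zero>\<^bsub>M\<^esub>"])

lemma splus_left: "\<zero>\<^bsub>M\<^esub> \<in> B \<Longrightarrow> A \<subseteq> carrier M \<Longrightarrow> A \<subseteq> set_plus_mod M A B"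
  unfolding set_plus_mod_def by (force intro: exI[of _ "\<zero>\<^bsub>M\<^esub>"])


lemma hull:
  assumes T1: "submodule T1 R M" "padic_complete R M p T1"
    and F: "\<And>n. finite (F n)" "\<And>n. F n \<subseteq> T1"
  defines "A \<equiv> \<lambda>n. set_plus_mod M (span_fin R M (F n)) (pi_mult R M p n T1)"
  defines "K \<equiv> {x \<in> T1. \<forall>n. x \<in> A n}"
  shows "submodule K R M \<and> padic_complete R M p K \<and> (\<forall>n. K \<subseteq> A n)"
proof -
  note t = subm[OF T1(1)]
  have Fc: "F n \<subseteq> carrier M" for n using F(2) t(1) by blast
  have Asub: "submodule (A n) R M" for n
    unfolding A_def by (rule splus_sub[OF sp_sub[OF F(1) Fc] pm_sub[OF T1(1)]])
  note a = subm[OF Asub]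
  have pmA: "pi_mult R M p n T1 \<subseteq> A n" for n
    unfolding A_def
    by (rule splus_right[OF subm(2)[OF sp_sub[OF F(1) Fc]]]) (use subm(1)[OF pm_sub[OF T1(1)]] in auto)
  have closed: "b \<in> A n" if hh: "a \<in> A n" "b \<in> carrier M" "a \<ominus>\<^bsub>M\<^esub> b \<in> pi_mult R M p n T1" for a b n
  proof -
    have "a \<in> carrier M" using hh a(1) by blast
    then have "b = a \<ominus>\<^bsub>M\<^esub> (a \<ominus>\<^bsub>M\<^esub> b)" using gid3 hh by simp
    moreover have "a \<ominus>\<^bsub>M\<^esub> b \<in> A n" using pmA hh(3) by blast
    then have "a \<ominus>\<^bsub>M\<^esub> (a \<ominus>\<^bsub>M\<^esub> b) \<in> A n" using a(6)[OF hh(1)] by blast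
    ultimately show ?thesis by simp
  qed
  have Ksub: "submodule K R M"
  proof (rule submoduleI)
    show "K \<subseteq> carrier M" unfolding K_def using t(1) by auto
    show "\<zero>\<^bsub>M\<^esub> \<in> K" unfolding K_def using t(2) a(2) by auto
    show "\<ominus>\<^bsub>M\<^esub> x \<in> K" if hh: "x \<in> K" for x using hh unfolding K_def by (auto intro: t(3) a(3))
    show "x \<oplus>\<^bsub>M\<^esub> y \<in> K" if hh: "x \<in> K" "y \<in> K" for x y using hh unfolding K_def by (auto intro: t(5) a(5))
    show "r \<odot>\<^bsub>M\<^esub> x \<in> K" if hh: "r \<in> carrier R" "x \<in> K" for r x using hh unfolding K_def by (auto intro: t(4) a(4))
  qed
  note k = subm[OF Ksub]
  have KA: "\<forall>n. K \<subseteq> A n" unfolding K_def by auto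
  have KT: "K \<subseteq> T1" unfolding K_def by auto
  have sepT: "(\<Inter>n. pi_mult R M p n T1) = {\<zero>\<^bsub>M\<^esub>}"
    using T1(2) unfolding padic_complete_def by (rule conjunct1)
  have limT0: "\<forall>x. (\<forall>n. x n \<in> T1) \<and> (\<forall>n. x (Suc n) \<ominus>\<^bsub>M\<^esub> x n \<in> pi_mult R M p n T1) \<longrightarrow>
        (\<exists>y\<in>T1. \<forall>n. x n \<ominus>\<^bsub>M\<^esub> y \<in> pi_mult R M p n T1)"
    using T1(2) unfolding padic_complete_def by (rule conjunct2)
  have limT: "\<And>x. (\<forall>n. x n \<in> T1) \<Longrightarrow> (\<forall>n. x (Suc n) \<ominus>\<^bsub>M\<^esub> x n \<in> pi_mult R M p n T1) \<Longrightarrow>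
        (\<exists>y\<in>T1. \<forall>n. x n \<ominus>\<^bsub>M\<^esub> y \<in> pi_mult R M p n T1)"
    using limT0 by blast
  have sepK: "(\<Inter>n. pi_mult R M p n K) = {\<zero>\<^bsub>M\<^esub>}"
  proof
    show "(\<Inter>n. pi_mult R M p n K) \<subseteq> {\<zero>\<^bsub>M\<^esub>}"
    proof
      fix d assume "d \<in> (\<Inter>n. pi_mult R M p n K)"
      then have "d \<in> pi_mult R M p n T1" for n using pm_mono[OF KT, of n] by blast
      then have "d \<in> (\<Inter>n. pi_mult R M p n T1)" by blast
      then show "d \<in> {\<zero>\<^bsub>M\<^esub>}" using sepT by simp
    qed
    have "\<zero>\<^bsub>M\<^esub> \<in> pi_mult R M p n K" for n using pm_in[OF k(2), of n] by simp
    then show "{\<zero>\<^bsub>M\<^esub>} \<subseteq> (\<Inter>n. pi_mult R M p n K)" by blast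
  qed
  have limK: "\<exists>y\<in>K. \<forall>n. x n \<ominus>\<^bsub>M\<^esub> y \<in> pi_mult R M p n K"
    if hx: "\<forall>n. x n \<in> K" "\<forall>n. x (Suc n) \<ominus>\<^bsub>M\<^esub> x n \<in> pi_mult R M p n K" for x
  proof -
    have xc: "x n \<in> carrier M" for n using hx k(1) by blast
    have "\<forall>n. \<exists>t. t \<in> K \<and> x (Suc n) \<ominus>\<^bsub>M\<^esub> x n = P n \<odot>\<^bsub>M\<^esub> t"
      using hx(2) unfolding pi_mult_def by blast
    from choice[OF this] obtain kk where kk: "\<And>n. kk n \<in> K" "\<And>n. x (Suc n) \<ominus>\<^bsub>M\<^esub> x n = P n \<odot>\<^bsub>M\<^esub> kk n"
      by blast
    have kkc: "kk n \<in> carrier M" for n using kk k(1) by blast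
    define s where "s = psum R M p kk"
    have s_in: "s m j \<in> K" for m j
    proof (induct j)
      case 0 show ?case using k(2) by (simp add: s_def)
    next
      case (Suc j)
      have "P j \<odot>\<^bsub>M\<^esub> kk (m + j) \<in> K" using k(4)[OF P_closed kk(1)] .
      then show ?case unfolding s_def using k(5)[OF Suc[unfolded s_def]] by simp
    qed
    have sc: "s m j \<in> carrier M" for m j using s_in k(1) by blast
    have s_eq: "P m \<odot>\<^bsub>M\<^esub> s m j = x (m + j) \<ominus>\<^bsub>M\<^esub> x m" for m j
    proof (induct j)
      case 0
      then show ?case using xc[of m] by (simp add: s_def minus_eq r_neg)
    next
      case (Suc j)
      have "P m \<odot>\<^bsub>M\<^esub> s m (Suc j) = P m \<odot>\<^bsub>M\<^esub> s m j \<oplus>\<^bsub>M\<^esub> P m \<odot>\<^bsub>M\<^esub> (P j \<odot>\<^bsub>M\<^esub> kk (m + j))"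
        using sc kkc by (simp add: s_def smult_r_distr)
      also have "\<dots> = (x (m + j) \<ominus>\<^bsub>M\<^esub> x m) \<oplus>\<^bsub>M\<^esub> (x (Suc (m + j)) \<ominus>\<^bsub>M\<^esub> x (m + j))"
        using Suc P_mult[OF kkc, of m j] kk(2)[of "m + j"] by simp
      also have "\<dots> = x (Suc (m + j)) \<ominus>\<^bsub>M\<^esub> x m" using gid1 xc by simp
      finally show ?case by simp
    qed
    have s_cauchy: "s m (Suc j) \<ominus>\<^bsub>M\<^esub> s m j \<in> pi_mult R M p j T1" for m j
    proof -
      have "s m (Suc j) \<ominus>\<^bsub>M\<^esub> s m j = P j \<odot>\<^bsub>M\<^esub> kk (m + j)"
        using gid2 sc kkc by (simp add: s_def)
      then show ?thesis using pm_in[of "kk (m + j)" T1 j] kk(1) KT by auto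
    qed
    have "\<forall>m. \<exists>z\<in>T1. \<forall>j. s m j \<ominus>\<^bsub>M\<^esub> z \<in> pi_mult R M p j T1"
    proof
      fix m
      have "\<forall>n. s m n \<in> T1" using s_in KT by blast
      moreover have "\<forall>n. s m (Suc n) \<ominus>\<^bsub>M\<^esub> s m n \<in> pi_mult R M p n T1" using s_cauchy by blast
      ultimately show "\<exists>z\<in>T1. \<forall>j. s m j \<ominus>\<^bsub>M\<^esub> z \<in> pi_mult R M p j T1" by (rule limT)
    qed
    from choice[OF this[unfolded Bex_def]] obtain z where
      z: "\<And>m. z m \<in> T1" "\<And>m j. s m j \<ominus>\<^bsub>M\<^esub> z m \<in> pi_mult R M p j T1" by blast
    have zc: "z m \<in> carrier M" for m using z t(1) by blast
    obtain y where y: "y \<in> T1" "\<And>n. x n \<ominus>\<^bsub>M\<^esub> y \<in> pi_mult R M p n T1"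
    proof -
      have a1: "\<forall>n. x n \<in> T1" using hx(1) KT by blast
      have "x (Suc n) \<ominus>\<^bsub>M\<^esub> x n \<in> pi_mult R M p n T1" for n
        using hx(2) pm_mono[OF KT, of n] by blast
      then have a2: "\<forall>n. x (Suc n) \<ominus>\<^bsub>M\<^esub> x n \<in> pi_mult R M p n T1" by blast
      show ?thesis using limT[OF a1 a2] that by blast
    qed
    have yc: "y \<in> carrier M" using y t(1) by blast
    have "y \<in> A n" for n
    proof -
      have "x n \<in> A n" using hx(1) KA by blast
      then show ?thesis using closed[of "x n" n y, OF _ yc y(2)] by blast
    qed
    then have yK: "y \<in> K" unfolding K_def using y(1) by blast
    have "z m \<in> A n" for m n
    proof -
      have "s m n \<in> A n" using s_in KA by blast
      then show ?thesis using closed[of "s m n" n "z m", OF _ zc z(2)] by blast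
    qed
    then have zK: "z m \<in> K" for m unfolding K_def using z(1) by blast
    have main: "x m \<ominus>\<^bsub>M\<^esub> y \<in> pi_mult R M p m K" for m
    proof -
      define d where "d = (x m \<ominus>\<^bsub>M\<^esub> y) \<oplus>\<^bsub>M\<^esub> P m \<odot>\<^bsub>M\<^esub> z m"
      have dj: "d \<in> pi_mult R M p (m + j) T1" for j
      proof -
        have e: "x (m + j) \<ominus>\<^bsub>M\<^esub> y \<in> pi_mult R M p (m + j) T1" using y(2) .
        have q: "P m \<odot>\<^bsub>M\<^esub> (s m j \<ominus>\<^bsub>M\<^esub> z m) \<in> pi_mult R M p (m + j) T1"
          using pm_pm[OF T1(1) z(2)] .
        have "P m \<odot>\<^bsub>M\<^esub> (s m j \<ominus>\<^bsub>M\<^esub> z m) = P m \<odot>\<^bsub>M\<^esub> s m j \<ominus>\<^bsub>M\<^esub> P m \<odot>\<^bsub>M\<^esub> z m"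
          using sc zc by (simp add: minus_eq smult_r_distr smult_r_minus)
        also have "\<dots> = (x (m + j) \<ominus>\<^bsub>M\<^esub> x m) \<ominus>\<^bsub>M\<^esub> P m \<odot>\<^bsub>M\<^esub> z m" using s_eq by simp
        finally have qe: "P m \<odot>\<^bsub>M\<^esub> (s m j \<ominus>\<^bsub>M\<^esub> z m) = (x (m + j) \<ominus>\<^bsub>M\<^esub> x m) \<ominus>\<^bsub>M\<^esub> P m \<odot>\<^bsub>M\<^esub> z m" .
        have "(x (m + j) \<ominus>\<^bsub>M\<^esub> y) \<ominus>\<^bsub>M\<^esub> ((x (m + j) \<ominus>\<^bsub>M\<^esub> x m) \<ominus>\<^bsub>M\<^esub> P m \<odot>\<^bsub>M\<^esub> z m) = d"
          unfolding d_def using gid4 xc yc zc by simp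
        moreover have "(x (m + j) \<ominus>\<^bsub>M\<^esub> y) \<ominus>\<^bsub>M\<^esub> ((x (m + j) \<ominus>\<^bsub>M\<^esub> x m) \<ominus>\<^bsub>M\<^esub> P m \<odot>\<^bsub>M\<^esub> z m)
              \<in> pi_mult R M p (m + j) T1"
          using subm(6)[OF pm_sub[OF T1(1)] e q[unfolded qe]] .
        ultimately show ?thesis by simp
      qed
      have "d \<in> pi_mult R M p n T1" for n
        using dj[of n] pm_anti[OF T1(1), of n "m + n"] by auto
      then have "d \<in> (\<Inter>n. pi_mult R M p n T1)" by blast
      then have "d = \<zero>\<^bsub>M\<^esub>" using sepT by blast
      then have "x m \<ominus>\<^bsub>M\<^esub> y = \<ominus>\<^bsub>M\<^esub> (P m \<odot>\<^bsub>M\<^esub> z m)"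
        unfolding d_def using gid5 xc yc zc by simp
      also have "\<dots> = P m \<odot>\<^bsub>M\<^esub> (\<ominus>\<^bsub>M\<^esub> z m)" using zc smult_r_minus by simp
      finally show ?thesis using pm_in[of "\<ominus>\<^bsub>M\<^esub> z m" K m] k(3) zK by simp
    qed
    show ?thesis using yK main by blast
  qed
  have "padic_complete R M p K" unfolding padic_complete_def using sepK limK by blast
  then show ?thesis using Ksub KA by blast
qed

end

lemma splus_mono: "A \<subseteq> A' \<Longrightarrow> B \<subseteq> B' \<Longrightarrow> set_plus_mod M A B \<subseteq> set_plus_mod M A' B'"
  unfolding set_plus_mod_def by blast

lemma span_image:
  assumes pm: "pmod V M p" and pc: "pmod V C p" and lin: "linear_map V M C f"
    and F: "finite F" "F \<subseteq> carrier M" and x: "x \<in> span_fin V M F"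
  shows "f x \<in> span_fin V C (f ` F)"
proof -
  interpret M: pmod V M p by (rule pm)
  interpret C: pmod V C p by (rule pc)
  have fc: "\<And>y. y \<in> carrier M \<Longrightarrow> f y \<in> carrier C" using lin unfolding linear_map_def by blast
  have fadd: "\<And>a b. a \<in> carrier M \<Longrightarrow> b \<in> carrier M \<Longrightarrow> f (a \<oplus>\<^bsub>M\<^esub> b) = f a \<oplus>\<^bsub>C\<^esub> f b"
    using lin unfolding linear_map_def by blast
  have fsm: "\<And>a y. a \<in> carrier V \<Longrightarrow> y \<in> carrier M \<Longrightarrow> f (a \<odot>\<^bsub>M\<^esub> y) = a \<odot>\<^bsub>C\<^esub> f y"
    using lin unfolding linear_map_def by blast
  have fF: "finite (f ` F)" "f ` F \<subseteq> carrier C" using F fc by auto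
  note sc = C.subm[OF C.sp_sub[OF fF]]
  define N where "N = {y \<in> carrier M. f y \<in> span_fin V C (f ` F)}"
  have Nsub: "submodule N V M"
  proof (rule M.submoduleI)
    show "N \<subseteq> carrier M" unfolding N_def by blast
    have "f \<zero>\<^bsub>M\<^esub> = \<zero>\<^bsub>V\<^esub> \<odot>\<^bsub>C\<^esub> f \<zero>\<^bsub>M\<^esub>" using fsm[of "\<zero>\<^bsub>V\<^esub>" "\<zero>\<^bsub>M\<^esub>"] by simp
    also have "\<dots> = \<zero>\<^bsub>C\<^esub>" using fc by simp
    finally show "\<zero>\<^bsub>M\<^esub> \<in> N" unfolding N_def using sc(2) by simp
    show "\<ominus>\<^bsub>M\<^esub> a \<in> N" if hh: "a \<in> N" for a
    proof -
      have ac: "a \<in> carrier M" using hh unfolding N_def by blast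
      have "\<ominus>\<^bsub>M\<^esub> a = (\<ominus>\<^bsub>V\<^esub> \<one>\<^bsub>V\<^esub>) \<odot>\<^bsub>M\<^esub> a" using M.smult_l_minus[of "\<one>\<^bsub>V\<^esub>" a] ac by simp
      then have "f (\<ominus>\<^bsub>M\<^esub> a) = (\<ominus>\<^bsub>V\<^esub> \<one>\<^bsub>V\<^esub>) \<odot>\<^bsub>C\<^esub> f a" using fsm ac by simp
      then show ?thesis using hh sc(4) ac unfolding N_def by auto
    qed
    show "a \<oplus>\<^bsub>M\<^esub> b \<in> N" if hh: "a \<in> N" "b \<in> N" for a b
      using hh sc(5) fadd unfolding N_def by auto
    show "a \<odot>\<^bsub>M\<^esub> b \<in> N" if hh: "a \<in> carrier V" "b \<in> N" for a b
      using hh sc(4) fsm unfolding N_def by auto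
  qed
  have FN: "F \<subseteq> N" unfolding N_def using F(2) C.sp_incl[OF fF] by blast
  obtain c where c: "c \<in> F \<rightarrow> carrier V" "x = finsum M (\<lambda>f. c f \<odot>\<^bsub>M\<^esub> f) F"
    using x unfolding span_fin_def by blast
  have "x \<in> N" using M.sp_least[OF F(1) Nsub FN c(1)] c(2) by simp
  then show ?thesis unfolding N_def by blast
qed


theorem lemma4p4:
  fixes V :: "('v, 'x) ring_scheme" and p :: 'v
    and M :: "('v, 'm) module" and BM :: "'m set set"
    and C :: "('v, 'c) module" and BC :: "'c set set" and \<iota> :: "'m \<Rightarrow> 'c"
  assumes "complete_dvr V p"
    and "bornological_module V M BM"
    and "nuclear V p M BM"
    and "is_completion V p M BM C BC \<iota>"
  shows "bornological_module V C BC \<and> nuclear V p C BC"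
proof -
  have p: "p \<in> carrier V" using assms(1) unfolding complete_dvr_def by blast
  have bornC: "bornological_module V C BC" and cbC: "complete_born V p C BC"
    and bmap: "bounded_map V M BM C BC \<iota>"
    and univ: "\<And>(D::('v, 'c) module) BD g.
        bornological_module V D BD \<Longrightarrow> complete_born V p D BD \<Longrightarrow> bounded_map V M BM D BD g \<Longrightarrow>
        (\<exists>h. bounded_map V C BC D BD h \<and> (\<forall>x\<in>carrier M. h (\<iota> x) = g x) \<and>
             (\<forall>h'. bounded_map V C BC D BD h' \<and> (\<forall>x\<in>carrier M. h' (\<iota> x) = g x) \<longrightarrow>
                   (\<forall>y\<in>carrier C. h' y = h y)))"
    using assms(4) unfolding is_completion_def by blast+
  have modC: "module V C" using bornC unfolding bornological_module_def by blast
  have modM: "module V M" using assms(2) unfolding bornological_module_def by blast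
  have pmC: "pmod V C p" by (rule pmod.intro[OF modC]) (unfold_locales, rule p)
  have pmM: "pmod V M p" by (rule pmod.intro[OF modM]) (unfold_locales, rule p)
  interpret C: pmod V C p by (rule pmC)
  interpret M: pmod V M p by (rule pmM)
  note bd = bornC[unfolded bornological_module_def]
  note bd2 = conjunct1[OF conjunct2[OF bd]]
  note bd3 = conjunct1[OF conjunct2[OF conjunct2[OF bd]]]
  note bd4 = conjunct1[OF conjunct2[OF conjunct2[OF conjunct2[OF bd]]]]
  note bd5 = conjunct1[OF conjunct2[OF conjunct2[OF conjunct2[OF conjunct2[OF bd]]]]]
  note bd6 = conjunct2[OF conjunct2[OF conjunct2[OF conjunct2[OF conjunct2[OF bd]]]]]
  have BCc: "\<And>S. S \<in> BC \<Longrightarrow> S \<subseteq> carrier C" using bd2 by blast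
  have BCfin: "\<And>S. finite S \<Longrightarrow> S \<subseteq> carrier C \<Longrightarrow> S \<in> BC" using bd3 by blast
  have BCun: "\<And>S T. S \<in> BC \<Longrightarrow> T \<in> BC \<Longrightarrow> S \<union> T \<in> BC" using bd4 by blast
  have BCsub: "\<And>S T. S \<in> BC \<Longrightarrow> T \<subseteq> S \<Longrightarrow> T \<in> BC" using bd5 by blast
  have BChull: "\<And>S. S \<in> BC \<Longrightarrow> \<exists>T\<in>BC. submodule T V C \<and> S \<subseteq> T" using bd6 by blast
  define B' where "B' = {S \<in> BC. compactoid V p C BC S}"
  have B'BC: "B' \<subseteq> BC" unfolding B'_def by blast
  have key: "\<exists>K\<in>B'. submodule K V C \<and> S \<subseteq> K \<and> padic_complete V C p K" if hS: "S \<in> B'" for S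
  proof -
    have "compactoid V p C BC S" using hS unfolding B'_def by blast
    then obtain T where T: "T \<in> BC" "submodule T V C" "S \<subseteq> T"
      "\<forall>n::nat. \<exists>F. finite F \<and> F \<subseteq> T \<and> S \<subseteq> set_plus_mod C (span_fin V C F) (pi_mult V C p n T)"
      unfolding compactoid_def by blast
    from choice[OF T(4)] obtain F where F: "\<And>n. finite (F n)" "\<And>n. F n \<subseteq> T"
      "\<And>n. S \<subseteq> set_plus_mod C (span_fin V C (F n)) (pi_mult V C p n T)" by blast
    obtain T1 where T1: "T1 \<in> BC" "submodule T1 V C" "T \<subseteq> T1" "padic_complete V C p T1"
      using cbC T(1) unfolding complete_born_def by blast
    have F1: "\<And>n. F n \<subseteq> T1" using F(2) T1(3) by blast
    define A where "A = (\<lambda>n. set_plus_mod C (span_fin V C (F n)) (pi_mult V C p n T1))"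
    define K where "K = {x \<in> T1. \<forall>n. x \<in> A n}"
    have hK: "submodule K V C \<and> padic_complete V C p K \<and> (\<forall>n. K \<subseteq> A n)"
      using C.hull[of T1 F, OF T1(2) T1(4) F(1) F1] unfolding A_def K_def by blast
    have KT1: "K \<subseteq> T1" unfolding K_def by blast
    have KBC: "K \<in> BC" using BCsub[OF T1(1) KT1] .
    have "compactoid V p C BC K" unfolding compactoid_def
    proof (intro bexI[of _ T1] conjI allI)
      show "T1 \<in> BC" "submodule T1 V C" "K \<subseteq> T1" using T1 KT1 by auto
      fix n
      show "\<exists>F. finite F \<and> F \<subseteq> T1 \<and> K \<subseteq> set_plus_mod C (span_fin V C F) (pi_mult V C p n T1)"
      proof (intro exI[of _ "F n"] conjI)
        show "finite (F n)" using F(1) .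
        show "F n \<subseteq> T1" using F1 .
        have "K \<subseteq> A n" using conjunct2[OF conjunct2[OF hK]] by blast
        then show "K \<subseteq> set_plus_mod C (span_fin V C (F n)) (pi_mult V C p n T1)" unfolding A_def .
      qed
    qed
    then have KB': "K \<in> B'" unfolding B'_def using KBC by blast
    have SA: "S \<subseteq> A n" for n
    proof -
      have "S \<subseteq> set_plus_mod C (span_fin V C (F n)) (pi_mult V C p n T)" using F(3) .
      also have "\<dots> \<subseteq> A n" unfolding A_def by (rule splus_mono[OF order_refl C.pm_mono[OF T1(3)]])
      finally show ?thesis .
    qed
    have SK: "S \<subseteq> K"
    proof
      fix x assume x: "x \<in> S"
      have "x \<in> T1" using x T(3) T1(3) by blast
      moreover have "\<forall>n. x \<in> A n" using x SA by blast
      ultimately show "x \<in> K" unfolding K_def by blast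
    qed
    show ?thesis
    proof (rule bexI[OF _ KB'], intro conjI)
      show "submodule K V C" using hK by blast
      show "S \<subseteq> K" by (rule SK)
      show "padic_complete V C p K" using hK by blast
    qed
  qed
  have bB': "bornological_module V C B'"
    unfolding bornological_module_def
  proof (intro conjI ballI allI impI)
    show "module V C" by (rule modC)
    show "S \<subseteq> carrier C" if hh: "S \<in> B'" for S using hh B'BC BCc by blast
    show "S \<in> B'" if hh: "finite S \<and> S \<subseteq> carrier C" for S
    proof -
      have SBC: "S \<in> BC" using BCfin hh by blast
      then obtain T where T: "T \<in> BC" "submodule T V C" "S \<subseteq> T" using BChull by blast
      have "compactoid V p C BC S" unfolding compactoid_def
      proof (intro bexI[of _ T] conjI allI)
        show "T \<in> BC" "submodule T V C" "S \<subseteq> T" using T by auto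
        fix n
        have "S \<subseteq> span_fin V C S" using C.sp_incl hh by blast
        also have "\<dots> \<subseteq> set_plus_mod C (span_fin V C S) (pi_mult V C p n T)"
          by (rule C.splus_left[OF C.subm(2)[OF C.pm_sub[OF T(2)]] C.subm(1)[OF C.sp_sub]]) (use hh in auto)
        finally show "\<exists>F. finite F \<and> F \<subseteq> T \<and> S \<subseteq> set_plus_mod C (span_fin V C F) (pi_mult V C p n T)"
          using hh T(3) by blast
      qed
      then show ?thesis unfolding B'_def using SBC by blast
    qed
    show "S \<union> T \<in> B'" if hh: "S \<in> B'" "T \<in> B'" for S T
    proof -
      have SBC: "S \<in> BC" "T \<in> BC" using hh B'BC by auto
      obtain T1 where T1: "T1 \<in> BC" "submodule T1 V C" "S \<subseteq> T1"
        "\<forall>n::nat. \<exists>F. finite F \<and> F \<subseteq> T1 \<and> S \<subseteq> set_plus_mod C (span_fin V C F) (pi_mult V C p n T1)"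
        using hh(1) unfolding B'_def compactoid_def by blast
      obtain T2 where T2: "T2 \<in> BC" "submodule T2 V C" "T \<subseteq> T2"
        "\<forall>n::nat. \<exists>F. finite F \<and> F \<subseteq> T2 \<and> T \<subseteq> set_plus_mod C (span_fin V C F) (pi_mult V C p n T2)"
        using hh(2) unfolding B'_def compactoid_def by blast
      obtain T3 where T3: "T3 \<in> BC" "submodule T3 V C" "T1 \<union> T2 \<subseteq> T3"
        using BChull[OF BCun[OF T1(1) T2(1)]] by blast
      have T3c: "T3 \<subseteq> carrier C" using C.subm(1)[OF T3(2)] .
      have "compactoid V p C BC (S \<union> T)" unfolding compactoid_def
      proof (intro bexI[of _ T3] conjI allI)
        show "T3 \<in> BC" "submodule T3 V C" "S \<union> T \<subseteq> T3" using T3 T1(3) T2(3) by auto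
        fix n
        obtain F1 where F1: "finite F1" "F1 \<subseteq> T1" "S \<subseteq> set_plus_mod C (span_fin V C F1) (pi_mult V C p n T1)"
          using T1(4) by blast
        obtain F2 where F2: "finite F2" "F2 \<subseteq> T2" "T \<subseteq> set_plus_mod C (span_fin V C F2) (pi_mult V C p n T2)"
          using T2(4) by blast
        have G: "finite (F1 \<union> F2)" "F1 \<union> F2 \<subseteq> T3" using F1 F2 T3(3) by auto
        have Gc: "F1 \<union> F2 \<subseteq> carrier C" using G(2) T3c by blast
        have "S \<subseteq> set_plus_mod C (span_fin V C (F1 \<union> F2)) (pi_mult V C p n T3)"
        proof -
          have "span_fin V C F1 \<subseteq> span_fin V C (F1 \<union> F2)" by (rule C.sp_mono[OF F1(1) G(1) Gc]) blast
          moreover have "pi_mult V C p n T1 \<subseteq> pi_mult V C p n T3" by (rule C.pm_mono) (use T3(3) in blast)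
          ultimately show ?thesis using F1(3) splus_mono by blast
        qed
        moreover have "T \<subseteq> set_plus_mod C (span_fin V C (F1 \<union> F2)) (pi_mult V C p n T3)"
        proof -
          have "span_fin V C F2 \<subseteq> span_fin V C (F1 \<union> F2)" by (rule C.sp_mono[OF F2(1) G(1) Gc]) blast
          moreover have "pi_mult V C p n T2 \<subseteq> pi_mult V C p n T3" by (rule C.pm_mono) (use T3(3) in blast)
          ultimately show ?thesis using F2(3) splus_mono by blast
        qed
        ultimately show "\<exists>F. finite F \<and> F \<subseteq> T3 \<and> S \<union> T \<subseteq> set_plus_mod C (span_fin V C F) (pi_mult V C p n T3)"
          using G by blast
      qed
      then show ?thesis unfolding B'_def using BCun[OF SBC] by blast
    qed
    show "T \<in> B'" if hh: "S \<in> B'" "T \<subseteq> S" for S T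
    proof -
      have "T \<in> BC" using hh B'BC BCsub by blast
      moreover have "compactoid V p C BC T"
      proof -
        have "compactoid V p C BC S" using hh(1) unfolding B'_def by blast
        then obtain W where W: "W \<in> BC" "submodule W V C" "S \<subseteq> W"
          "\<forall>n::nat. \<exists>F. finite F \<and> F \<subseteq> W \<and> S \<subseteq> set_plus_mod C (span_fin V C F) (pi_mult V C p n W)"
          unfolding compactoid_def by blast
        show ?thesis unfolding compactoid_def
        proof (intro bexI[of _ W] conjI allI)
          show "submodule W V C" "W \<in> BC" using W by auto
          show "T \<subseteq> W" using W(3) hh(2) by blast
          fix n
          obtain F where "finite F" "F \<subseteq> W" "S \<subseteq> set_plus_mod C (span_fin V C F) (pi_mult V C p n W)"
            using W(4) by blast
          then show "\<exists>F. finite F \<and> F \<subseteq> W \<and> T \<subseteq> set_plus_mod C (span_fin V C F) (pi_mult V C p n W)"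
            using hh(2) by blast
        qed
      qed
      ultimately show ?thesis unfolding B'_def by blast
    qed
    show "\<exists>T\<in>B'. submodule T V C \<and> S \<subseteq> T" if hh: "S \<in> B'" for S
      using key[OF hh] by blast
  qed
  have cB': "complete_born V p C B'" unfolding complete_born_def using key by blast
  have linI: "linear_map V M C \<iota>" using bmap unfolding bounded_map_def by blast
  have bmB': "bounded_map V M BM C B' \<iota>" unfolding bounded_map_def
  proof (intro conjI ballI)
    show "linear_map V M C \<iota>" by (rule linI)
    fix S assume hS: "S \<in> BM"
    have iSBC: "\<iota> ` S \<in> BC" using bmap hS unfolding bounded_map_def by blast
    have "compactoid V p M BM S" using assms(3) hS unfolding nuclear_def by blast
    then obtain T0 where T0: "T0 \<in> BM" "submodule T0 V M" "S \<subseteq> T0"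
      "\<forall>n::nat. \<exists>F. finite F \<and> F \<subseteq> T0 \<and> S \<subseteq> set_plus_mod M (span_fin V M F) (pi_mult V M p n T0)"
      unfolding compactoid_def by blast
    have T0c: "T0 \<subseteq> carrier M" using M.subm(1)[OF T0(2)] .
    have "\<iota> ` T0 \<in> BC" using bmap T0(1) unfolding bounded_map_def by blast
    then obtain T where T: "T \<in> BC" "submodule T V C" "\<iota> ` T0 \<subseteq> T" using BChull by blast
    have ic: "\<And>y. y \<in> carrier M \<Longrightarrow> \<iota> y \<in> carrier C" using linI unfolding linear_map_def by blast
    have iadd: "\<And>a b. a \<in> carrier M \<Longrightarrow> b \<in> carrier M \<Longrightarrow> \<iota> (a \<oplus>\<^bsub>M\<^esub> b) = \<iota> a \<oplus>\<^bsub>C\<^esub> \<iota> b"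
      using linI unfolding linear_map_def by blast
    have ism: "\<And>a y. a \<in> carrier V \<Longrightarrow> y \<in> carrier M \<Longrightarrow> \<iota> (a \<odot>\<^bsub>M\<^esub> y) = a \<odot>\<^bsub>C\<^esub> \<iota> y"
      using linI unfolding linear_map_def by blast
    have "compactoid V p C BC (\<iota> ` S)" unfolding compactoid_def
    proof (intro bexI[of _ T] conjI allI)
      show "T \<in> BC" "submodule T V C" "\<iota> ` S \<subseteq> T" using T T0(3) by auto
      fix n
      obtain F where F: "finite F" "F \<subseteq> T0" "S \<subseteq> set_plus_mod M (span_fin V M F) (pi_mult V M p n T0)"
        using T0(4) by blast
      have Fc: "F \<subseteq> carrier M" using F(2) T0c by blast
      have "\<iota> x \<in> set_plus_mod C (span_fin V C (\<iota> ` F)) (pi_mult V C p n T)" if hx: "x \<in> S" for x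
      proof -
        obtain a b where ab: "a \<in> span_fin V M F" "b \<in> pi_mult V M p n T0" "x = a \<oplus>\<^bsub>M\<^esub> b"
          using F(3) hx unfolding set_plus_mod_def by blast
        obtain t where t: "t \<in> T0" "b = C.P n \<odot>\<^bsub>M\<^esub> t" using ab(2) unfolding pi_mult_def by blast
        have ac: "a \<in> carrier M" using M.subm(1)[OF M.sp_sub[OF F(1) Fc]] ab(1) by blast
        have tc: "t \<in> carrier M" using t(1) T0c by blast
        have bc: "b \<in> carrier M" using t tc by simp
        have "\<iota> x = \<iota> a \<oplus>\<^bsub>C\<^esub> C.P n \<odot>\<^bsub>C\<^esub> \<iota> t" using ab(3) iadd ac bc t(2) ism tc by simp
        moreover have "\<iota> a \<in> span_fin V C (\<iota> ` F)" using span_image[OF pmM pmC linI F(1) Fc ab(1)] .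
        moreover have "C.P n \<odot>\<^bsub>C\<^esub> \<iota> t \<in> pi_mult V C p n T" using C.pm_in[of "\<iota> t" T n] T(3) t(1) by blast
        ultimately show ?thesis unfolding set_plus_mod_def by blast
      qed
      then have "\<iota> ` S \<subseteq> set_plus_mod C (span_fin V C (\<iota> ` F)) (pi_mult V C p n T)" by blast
      moreover have "finite (\<iota> ` F)" "\<iota> ` F \<subseteq> T" using F(1,2) T(3) by auto
      ultimately show "\<exists>F. finite F \<and> F \<subseteq> T \<and> \<iota> ` S \<subseteq> set_plus_mod C (span_fin V C F) (pi_mult V C p n T)"
        by blast
    qed
    then show "\<iota> ` S \<in> B'" unfolding B'_def using iSBC by blast
  qed
  obtain h where h: "bounded_map V C BC C B' h" "\<forall>x\<in>carrier M. h (\<iota> x) = \<iota> x"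
    using univ[OF bB' cB' bmB'] by blast
  obtain h0 where h0: "\<forall>h'. bounded_map V C BC C BC h' \<and> (\<forall>x\<in>carrier M. h' (\<iota> x) = \<iota> x) \<longrightarrow>
                   (\<forall>y\<in>carrier C. h' y = h0 y)"
    using univ[OF bornC cbC bmap] by blast
  have linid: "linear_map V C C (\<lambda>y. y)" unfolding linear_map_def by auto
  have "bounded_map V C BC C BC (\<lambda>y. y)" unfolding bounded_map_def using linid by simp
  then have e1: "\<forall>y\<in>carrier C. y = h0 y" using h0 by blast
  have "bounded_map V C BC C BC h" using h(1) B'BC unfolding bounded_map_def by blast
  then have e2: "\<forall>y\<in>carrier C. h y = h0 y" using h0 h(2) by blast
  have hid: "\<forall>y\<in>carrier C. h y = y" using e1 e2 by simp
  have "nuclear V p C BC" unfolding nuclear_def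
  proof
    fix S assume hS: "S \<in> BC"
    have "h ` S \<in> B'" using h(1) hS unfolding bounded_map_def by blast
    moreover have "h ` S = S" using hid BCc[OF hS] by (force simp: subsetD)
    ultimately show "compactoid V p C BC S" unfolding B'_def by simp
  qed
  then show ?thesis using bornC by blast
qed

end
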